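(* In the setting of the context, fix $j\in\{1,2,3\}$ and let $A_1:=\Lambda_g$, $A_2=A_3:=\Lambda$. Assume there exists $\lambda_0\in A_j$ with $\Phi_j(\lambda_0)<1$, and that $\widehat X_{\lambda_k}\to+\infty$ in probability as $k\to\infty$ for every sequence $(\lambda_k)\subset A_j$ with $|\lambda_k|\to\infty$. Then there exists $M>0$ such that $$\inf_{\lambda\in A_j}\Phi_j(\lambda)=\inf_{\lambda\in A_j,\ |\lambda|\le M}\Phi_j(\lambda).$$
   Context: Let $X$ be a real random variable with continuous c.d.f. $F_X$ and $\mathcal X_n=(X_1,\dots,X_n)$ a random vector on the same probability space. Let $\Lambda\subseteq\mathbb R^n$, $g:\Lambda\times\mathbb R^n\to\mathbb R$ measurable, $\widehat X_\lambda:=g(\lambda,\mathcal X_n)$, and $\Lambda_g:=\{\lambda\in\Lambda:F_X(\widehat X_\lambda)\text{ is uniform on }(0,1)\}$. $|\cdot|$ is the Euclidean norm. For $\gamma>0$ define $\Phi_1(\lambda)=\mathbf E F_X(X\vee\widehat X_\lambda)$, $\Phi_2(\lambda)=2\,\mathbf E F_X(X\vee\widehat X_\lambda)-\mathbf E F_X(\widehat X_\lambda)$, $\Phi_3(\lambda)=\Phi_2(\lambda)+\gamma\big[\mathbf E F_X^2(\widehat X_\lambda)-\mathbf E[F_X(\widehat X_\lambda)\vee Y_\lambda]\big]$, where $Y_\lambda$ is a copy of $F_X(\widehat X_\lambda)$ independent of $F_X(\widehat X_\lambda)$, and $a\vee b=\max\{a,b\}$. *)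

theory Defs
  imports "HOL-Probability.Probability"
begin

definition FX :: "'a measure \<Rightarrow> ('a \<Rightarrow> real) \<Rightarrow> real \<Rightarrow> real" where
  "FX M X = cdf (distr M borel X)"

definition Xhat :: "(real^'n \<Rightarrow> real^'n \<Rightarrow> real) \<Rightarrow> ('a \<Rightarrow> real^'n) \<Rightarrow> real^'n \<Rightarrow> 'a \<Rightarrow> real" where
  "Xhat g Xn l = (\<lambda>\<omega>. g l (Xn \<omega>))"

definition Lambda_g :: "'a measure \<Rightarrow> ('a \<Rightarrow> real) \<Rightarrow> ('a \<Rightarrow> real^'n)
    \<Rightarrow> (real^'n \<Rightarrow> real^'n \<Rightarrow> real) \<Rightarrow> (real^'n) set \<Rightarrow> (real^'n) set" where
  "Lambda_g M X Xn g \<Lambda> =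
     {l \<in> \<Lambda>. distr M borel (\<lambda>\<omega>. FX M X (Xhat g Xn l \<omega>)) = uniform_measure lborel {0<..<1}}"

definition Phi1 :: "'a measure \<Rightarrow> ('a \<Rightarrow> real) \<Rightarrow> ('a \<Rightarrow> real^'n)
    \<Rightarrow> (real^'n \<Rightarrow> real^'n \<Rightarrow> real) \<Rightarrow> real^'n \<Rightarrow> real" where
  "Phi1 M X Xn g l = (\<integral>\<omega>. FX M X (max (X \<omega>) (Xhat g Xn l \<omega>)) \<partial>M)"

definition Phi2 :: "'a measure \<Rightarrow> ('a \<Rightarrow> real) \<Rightarrow> ('a \<Rightarrow> real^'n)
    \<Rightarrow> (real^'n \<Rightarrow> real^'n \<Rightarrow> real) \<Rightarrow> real^'n \<Rightarrow> real" where
  "Phi2 M X Xn g l = 2 * Phi1 M X Xn g l - (\<integral>\<omega>. FX M X (Xhat g Xn l \<omega>) \<partial>M)"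

text \<open>E[F(hat X) max Y] with Y an independent copy of F(hat X): integral of max
  against the product of the law of F(hat X) with itself.\<close>
definition Phi3 :: "real \<Rightarrow> 'a measure \<Rightarrow> ('a \<Rightarrow> real) \<Rightarrow> ('a \<Rightarrow> real^'n)
    \<Rightarrow> (real^'n \<Rightarrow> real^'n \<Rightarrow> real) \<Rightarrow> real^'n \<Rightarrow> real" where
  "Phi3 \<gamma> M X Xn g l =
     (let D = distr M borel (\<lambda>\<omega>. FX M X (Xhat g Xn l \<omega>)) in
      Phi2 M X Xn g l + \<gamma> * ((\<integral>\<omega>. (FX M X (Xhat g Xn l \<omega>))^2 \<partial>M)
                                - (\<integral>p. max (fst p) (snd p) \<partial>(D \<Otimes>\<^sub>M D))))"

definition PhiJ :: "nat \<Rightarrow> real \<Rightarrow> 'a measure \<Rightarrow> ('a \<Rightarrow> real) \<Rightarrow> ('a \<Rightarrow> real^'n)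
    \<Rightarrow> (real^'n \<Rightarrow> real^'n \<Rightarrow> real) \<Rightarrow> real^'n \<Rightarrow> real" where
  "PhiJ j \<gamma> M X Xn g = (if j = 1 then Phi1 M X Xn g else if j = 2 then Phi2 M X Xn g
                          else Phi3 \<gamma> M X Xn g)"

definition AJ :: "nat \<Rightarrow> 'a measure \<Rightarrow> ('a \<Rightarrow> real) \<Rightarrow> ('a \<Rightarrow> real^'n)
    \<Rightarrow> (real^'n \<Rightarrow> real^'n \<Rightarrow> real) \<Rightarrow> (real^'n) set \<Rightarrow> (real^'n) set" where
  "AJ j M X Xn g \<Lambda> = (if j = 1 then Lambda_g M X Xn g \<Lambda> else \<Lambda>)"

end

theory Submission imports Defs begin

lemma int_max_le1:
  assumes D: "prob_space D" "sets D = sets borel" "emeasure D {1<..} = 0"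
  shows "(\<integral>p. max (fst p) (snd p) \<partial>(D \<Otimes>\<^sub>M D)) \<le> (1::real)"
proof (cases "integrable (D \<Otimes>\<^sub>M D) (\<lambda>p. max (fst p) (snd p))")
  case True
  interpret P: prob_space "D \<Otimes>\<^sub>M D" using prob_space_pair[OF D(1) D(1)] .
  interpret Ds: prob_space D by fact
  have n1: "{1<..} \<in> null_sets D" using D by (simp add: null_sets_def)
  have s1: "{1<..} \<in> sets D" "UNIV \<in> sets D" using D by auto
  have sp: "space D = UNIV" using D(2) by (metis sets_eq_imp_space_eq space_borel)
  have N: "{1<..} \<times> UNIV \<union> UNIV \<times> {1<..} \<in> null_sets (D \<Otimes>\<^sub>M D)"
    using Ds.times_in_null_sets1[OF n1 s1(2)] Ds.times_in_null_sets2[OF s1(2) n1] by auto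
  have "AE p in D \<Otimes>\<^sub>M D. max (fst p) (snd p) \<le> 1"
    by (rule AE_I'[OF N]) (auto simp: space_pair_measure sp)
  then show ?thesis using P.integral_le_const[OF True] by simp
next
  case False
  then show ?thesis by (simp add: not_integrable_integral_eq)
qed

lemma FX_props:
  assumes "prob_space M" "X \<in> borel_measurable M"
  shows "0 \<le> FX M X x" "FX M X x \<le> 1" "mono (FX M X)" "(FX M X \<longlongrightarrow> 1) at_top"
    "FX M X \<in> borel_measurable borel"
proof -
  interpret prob_space M by fact
  interpret R: real_distribution "distr M borel X" using assms by simp
  show "0 \<le> FX M X x" "FX M X x \<le> 1" "(FX M X \<longlongrightarrow> 1) at_top"
    unfolding FX_def using R.cdf_nonneg R.cdf_bounded_prob R.cdf_lim_at_top_prob by auto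
  show m: "mono (FX M X)" unfolding FX_def mono_def using R.cdf_nondecreasing by auto
  show "FX M X \<in> borel_measurable borel" by (rule borel_measurable_mono[OF m])
qed

lemma EF_lower:
  assumes "prob_space M" "X \<in> borel_measurable M" "Y \<in> borel_measurable M"
  shows "(\<integral>\<omega>. FX M X (Y \<omega>) \<partial>M) \<ge> FX M X K - measure M {\<omega>\<in>space M. Y \<omega> \<le> K}"
    "(\<integral>\<omega>. (FX M X (Y \<omega>))^2 \<partial>M) \<ge> 2 * FX M X K - 1 - measure M {\<omega>\<in>space M. Y \<omega> \<le> K}"
    "integrable M (\<lambda>\<omega>. FX M X (Y \<omega>))"
    "integrable M (\<lambda>\<omega>. (FX M X (Y \<omega>))^2)"
proof -
  interpret prob_space M by fact
  note F = FX_props[OF assms(1,2)]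
  let ?F = "FX M X"
  have mF[measurable]: "?F \<in> borel_measurable borel" by (rule F(5))
  have [measurable]: "Y \<in> borel_measurable M" by fact
  let ?A = "{\<omega>\<in>space M. K < Y \<omega>}"
  let ?B = "{\<omega>\<in>space M. Y \<omega> \<le> K}"
  have A: "?A \<in> events" "?B \<in> events" by measurable
  have cA: "space M - ?B = ?A" by auto
  have pA: "prob ?A = 1 - prob ?B" using prob_compl[OF A(2)] cA by simp
  have i1: "integrable M (\<lambda>\<omega>. ?F (Y \<omega>))"
    by (rule integrable_const_bound[where B=1]) (auto simp: F(1,2) abs_le_iff intro: order_trans[OF _ F(1)])
  have i2: "integrable M (\<lambda>\<omega>. (?F (Y \<omega>))^2)"
    by (rule integrable_const_bound[where B=1]) (auto simp: F(1,2) abs_le_iff power_le_one)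
  show "integrable M (\<lambda>\<omega>. ?F (Y \<omega>))" "integrable M (\<lambda>\<omega>. (?F (Y \<omega>))^2)" using i1 i2 .
  have iI: "integrable M (\<lambda>\<omega>. ?F K * indicator ?A \<omega>)"
    using A by (intro integrable_mult_right) (simp add: integrable_indicator_iff emeasure_eq_measure)
  have FK: "0 \<le> ?F K" "?F K \<le> 1" using F by auto
  have pB: "0 \<le> prob ?B" "prob ?B \<le> 1" by auto
  have "(\<integral>\<omega>. ?F K * indicator ?A \<omega> \<partial>M) = ?F K * prob ?A"
    using A by simp
  also have "\<dots> = ?F K - ?F K * prob ?B" using pA by (simp add: right_diff_distrib)
  also have "\<dots> \<ge> ?F K - prob ?B" using FK pB by (simp add: mult_left_le_one_le)
  finally have L: "?F K - prob ?B \<le> (\<integral>\<omega>. ?F K * indicator ?A \<omega> \<partial>M)" .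
  have pw: "?F K * indicator ?A \<omega> \<le> ?F (Y \<omega>)" if "\<omega> \<in> space M" for \<omega>
    using that F(1)[of "Y \<omega>"] F(3) by (auto simp: indicator_def mono_def)
  have "(\<integral>\<omega>. ?F K * indicator ?A \<omega> \<partial>M) \<le> (\<integral>\<omega>. ?F (Y \<omega>) \<partial>M)"
    by (rule integral_mono[OF iI i1 pw])
  with L show "(\<integral>\<omega>. ?F (Y \<omega>) \<partial>M) \<ge> ?F K - prob ?B" by simp
  have pw2: "2 * ?F K - 1 - indicator ?B \<omega> \<le> (?F (Y \<omega>))^2" if "\<omega> \<in> space M" for \<omega>
  proof (cases "Y \<omega> \<le> K")
    case True
    have "0 \<le> (FX M X (Y \<omega>))^2" by simp
    moreover have "indicator {\<omega>\<in>space M. Y \<omega> \<le> K} \<omega> = (1::real)" using that True by (simp add: indicator_def)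
    ultimately show ?thesis using FK by linarith
  next
    case False
    then have "?F K \<le> ?F (Y \<omega>)" using F(3) by (simp add: mono_def)
    moreover have "2 * ?F K - 1 \<le> (?F K)^2"
    proof - have "0 \<le> (?F K - 1)^2" by simp moreover have "(?F K - 1)^2 = (?F K)^2 - 2 * ?F K + 1" by (simp add: power2_diff) ultimately show ?thesis by linarith qed
    moreover have "(?F K)^2 \<le> (?F (Y \<omega>))^2" using calculation(1) FK by (simp add: power_mono)
    ultimately show ?thesis using that False by (simp add: indicator_def)
  qed
  have iB: "integrable M (\<lambda>\<omega>. 2 * ?F K - 1 - indicator ?B \<omega>)"
    using A by (intro Bochner_Integration.integrable_diff) (simp_all add: integrable_indicator_iff emeasure_eq_measure)
  have "(\<integral>\<omega>. 2 * ?F K - 1 - indicator ?B \<omega> \<partial>M) = 2 * ?F K - 1 - prob ?B"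
    using A by (subst Bochner_Integration.integral_diff) (simp_all add: integrable_indicator_iff prob_space emeasure_eq_measure)
  moreover have "(\<integral>\<omega>. 2 * ?F K - 1 - indicator ?B \<omega> \<partial>M) \<le> (\<integral>\<omega>. (?F (Y \<omega>))^2 \<partial>M)"
    by (rule integral_mono[OF iB i2 pw2])
  ultimately show "(\<integral>\<omega>. (?F (Y \<omega>))^2 \<partial>M) \<ge> 2 * ?F K - 1 - prob ?B" by simp
qed


lemma Xhat_meas:
  assumes "l \<in> \<Lambda>" "Xn \<in> borel_measurable M"
    "(\<lambda>p. g (fst p) (snd p)) \<in> borel_measurable (restrict_space borel (\<Lambda> \<times> UNIV))"
  shows "Xhat g Xn l \<in> borel_measurable M"
proof -
  have p: "(\<lambda>\<omega>. (l, Xn \<omega>)) \<in> measurable M (restrict_space borel (\<Lambda> \<times> UNIV))"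
  proof (rule measurable_restrict_space2)
    show "(\<lambda>\<omega>. (l, Xn \<omega>)) \<in> space M \<rightarrow> \<Lambda> \<times> UNIV" using assms(1) by auto
    have "(\<lambda>\<omega>. (l, Xn \<omega>)) \<in> measurable M (borel \<Otimes>\<^sub>M borel)"
      using assms(2) by measurable
    then show "(\<lambda>\<omega>. (l, Xn \<omega>)) \<in> measurable M borel" by (simp add: borel_prod)
  qed
  have "(\<lambda>\<omega>. (\<lambda>p. g (fst p) (snd p)) (l, Xn \<omega>)) \<in> borel_measurable M"
    by (rule measurable_compose[OF p assms(3)])
  then show ?thesis by (simp add: Xhat_def)
qed

lemma Phi_bounds:
  assumes "prob_space M" "X \<in> borel_measurable M" "Xhat g Xn l \<in> borel_measurable M" "\<gamma> > 0" "j \<in> {1,2,3}"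
  shows "PhiJ j \<gamma> M X Xn g l \<ge> FX M X K - measure M {\<omega>\<in>space M. Xhat g Xn l \<omega> \<le> K}
            + (if j = 3 then \<gamma> * (2 * FX M X K - 2 - measure M {\<omega>\<in>space M. Xhat g Xn l \<omega> \<le> K}) else 0)"
    "PhiJ j \<gamma> M X Xn g l \<ge> - \<gamma>"
proof -
  interpret prob_space M by fact
  let ?Y = "Xhat g Xn l"
  let ?F = "FX M X"
  let ?q = "measure M {\<omega>\<in>space M. ?Y \<omega> \<le> K}"
  note F = FX_props[OF assms(1,2)]
  note E = EF_lower(1)[OF assms(1,2,3), of K] EF_lower(2)[OF assms(1,2,3), of K] EF_lower(3)[OF assms(1,2,3)]
  have [measurable]: "?F \<in> borel_measurable borel" "?Y \<in> borel_measurable M" "X \<in> borel_measurable M"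
    using F(5) assms by auto
  define Ev where "Ev = (\<integral>\<omega>. ?F (?Y \<omega>) \<partial>M)"
  define S where "S = (\<integral>\<omega>. (?F (?Y \<omega>))^2 \<partial>M)"
  define D where "D = distr M borel (\<lambda>\<omega>. ?F (?Y \<omega>))"
  define Mx where "Mx = (\<integral>p. max (fst p) (snd p) \<partial>(D \<Otimes>\<^sub>M D))"
  have Ev0: "Ev \<ge> 0" unfolding Ev_def by (rule integral_nonneg_AE) (simp add: F(1))
  have S0: "S \<ge> 0" unfolding S_def by (rule integral_nonneg_AE) simp
  have EvK: "Ev \<ge> ?F K - ?q" using E(1) by (simp add: Ev_def)
  have SK: "S \<ge> 2 * ?F K - 1 - ?q" using E(2) by (simp add: S_def)
  have i1: "integrable M (\<lambda>\<omega>. ?F (max (X \<omega>) (?Y \<omega>)))"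
    by (rule integrable_const_bound[where B=1]) (auto simp: F(1,2) abs_le_iff intro: order_trans[OF _ F(1)])
  have "Phi1 M X Xn g l \<ge> Ev" unfolding Phi1_def Ev_def
    by (rule integral_mono[OF E(3) i1]) (use F(3) in \<open>auto simp: mono_def\<close>)
  then have P1: "Phi1 M X Xn g l \<ge> Ev" "Phi2 M X Xn g l \<ge> Ev"
    by (auto simp: Phi2_def Ev_def)
  have Dp: "prob_space D" unfolding D_def by (rule prob_space_distr) measurable
  have Ds: "sets D = sets borel" unfolding D_def by simp
  have "emeasure D {1<..} = emeasure M ((\<lambda>\<omega>. ?F (?Y \<omega>)) -` {1<..} \<inter> space M)"
    unfolding D_def by (rule emeasure_distr) auto
  also have "(\<lambda>\<omega>. ?F (?Y \<omega>)) -` {1<..} \<inter> space M = {}" using F(2) by (meson disjoint_iff not_le vimage_eq greaterThan_iff IntE)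
  finally have D1: "emeasure D {1<..} = 0" by simp
  have Mx1: "Mx \<le> 1" unfolding Mx_def by (rule int_max_le1[OF Dp Ds D1])
  have P3: "Phi3 \<gamma> M X Xn g l = Phi2 M X Xn g l + \<gamma> * (S - Mx)"
    by (simp add: Phi3_def Let_def S_def Mx_def D_def)
  have g1: "\<gamma> * (S - Mx) \<ge> \<gamma> * (2 * ?F K - 2 - ?q)"
    using SK Mx1 assms(4) by (intro mult_left_mono) auto
  have g2: "\<gamma> * (S - Mx) \<ge> - \<gamma>"
    using S0 Mx1 assms(4) mult_left_mono[of "-1" "S - Mx" \<gamma>] by auto
  show "PhiJ j \<gamma> M X Xn g l \<ge> ?F K - ?q + (if j = 3 then \<gamma> * (2 * ?F K - 2 - ?q) else 0)"
    using P1 P3 g1 EvK assms(5) by (auto simp: PhiJ_def)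
  show "PhiJ j \<gamma> M X Xn g l \<ge> - \<gamma>"
    using P1 P3 g2 Ev0 assms(4) by (auto simp: PhiJ_def)
qed


lemma AJ_sub: "AJ j M X Xn g \<Lambda> \<subseteq> \<Lambda>"
  by (auto simp: AJ_def Lambda_g_def)

theorem mainTheorem11:
  fixes M :: "'a measure" and X :: "'a \<Rightarrow> real" and Xn :: "'a \<Rightarrow> real^'n"
    and \<Lambda> :: "(real^'n) set" and g :: "real^'n \<Rightarrow> real^'n \<Rightarrow> real"
    and \<gamma> :: real and j :: nat
  assumes "prob_space M"
    and "X \<in> borel_measurable M"
    and "\<And>x. isCont (FX M X) x"
    and "Xn \<in> borel_measurable M"
    and "(\<lambda>p. g (fst p) (snd p)) \<in> borel_measurable (restrict_space borel (\<Lambda> \<times> UNIV))"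
    and "\<gamma> > 0"
    and "j \<in> {1, 2, 3}"
    and "\<exists>l0 \<in> AJ j M X Xn g \<Lambda>. PhiJ j \<gamma> M X Xn g l0 < 1"
    and "\<And>ls :: nat \<Rightarrow> real^'n. (\<forall>k. ls k \<in> AJ j M X Xn g \<Lambda>) \<Longrightarrow>
            filterlim (\<lambda>k. norm (ls k)) at_top sequentially \<Longrightarrow>
            (\<forall>K::real. (\<lambda>k. measure M {\<omega> \<in> space M. Xhat g Xn (ls k) \<omega> \<le> K}) \<longlonglongrightarrow> 0)"
  shows "\<exists>R > 0. (INF l \<in> AJ j M X Xn g \<Lambda>. PhiJ j \<gamma> M X Xn g l)
                 = (INF l \<in> {l \<in> AJ j M X Xn g \<Lambda>. norm l \<le> R}. PhiJ j \<gamma> M X Xn g l)"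
proof -
  define A where "A = AJ j M X Xn g \<Lambda>"
  define \<Phi> where "\<Phi> = PhiJ j \<gamma> M X Xn g"
  define F where "F = FX M X"
  have meas: "Xhat g Xn l \<in> borel_measurable M" if "l \<in> A" for l
    using Xhat_meas[OF _ assms(4,5)] that AJ_sub unfolding A_def by blast
  have lowb: "\<Phi> l \<ge> - \<gamma>" if "l \<in> A" for l
    unfolding \<Phi>_def by (rule Phi_bounds(2)[OF assms(1,2) meas[OF that] assms(6,7)])
  obtain l0 where l0: "l0 \<in> A" "\<Phi> l0 < 1" using assms(8) unfolding A_def \<Phi>_def by blast
  define c where "c = (\<Phi> l0 + 1) / 2"
  have c: "\<Phi> l0 < c" "c < 1" using l0 by (auto simp: c_def)
  have key: "eventually (\<lambda>k. c < \<Phi> (ls k)) sequentially"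
    if ls: "\<forall>k. ls k \<in> A" "filterlim (\<lambda>k. norm (ls k)) at_top sequentially" for ls
  proof -
    define d where "d = (1 - c) / (2 + 3 * \<gamma>)"
    have d0: "d > 0" using c assms(6) by (auto simp: d_def)
    have dd: "(2 + 3 * \<gamma>) * d = 1 - c" using assms(6) by (simp add: d_def)
    have "(F \<longlongrightarrow> 1) at_top" unfolding F_def using FX_props(4)[OF assms(1,2)] .
    then have "eventually (\<lambda>x. F x > 1 - d) at_top"
      using d0 by (intro order_tendstoD(1)) auto
    then obtain K where K: "F K > 1 - d" by (auto simp: eventually_at_top_linorder)
    define q where "q = (\<lambda>k. measure M {\<omega> \<in> space M. Xhat g Xn (ls k) \<omega> \<le> K})"
    have "q \<longlonglongrightarrow> 0" using assms(9)[of ls] ls unfolding q_def A_def by blast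
    then have "eventually (\<lambda>k. q k < d) sequentially" using d0 by (intro order_tendstoD(2)) auto
    then show ?thesis
    proof eventually_elim
      case (elim k)
      have b: "\<Phi> (ls k) \<ge> F K - q k + (if j = 3 then \<gamma> * (2 * F K - 2 - q k) else 0)"
        unfolding \<Phi>_def F_def q_def
        by (rule Phi_bounds(1)[OF assms(1,2) meas[OF ls(1)[rule_format]] assms(6,7)])
      have h1: "F K - q k > 1 - 2 * d" using K elim by linarith
      have h2: "\<gamma> * (2 * F K - 2 - q k) > \<gamma> * (- 3 * d)"
        using K elim assms(6) by (intro mult_strict_left_mono) auto
      have "1 - 2 * d - \<gamma> * 3 * d = c" using dd by (simp add: algebra_simps)
      moreover have "\<gamma> * 3 * d \<ge> 0" using d0 assms(6) by simp
      ultimately show ?case using b h1 h2 by (auto split: if_splits)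
    qed
  qed
  have "\<exists>R. \<forall>l\<in>A. R < norm l \<longrightarrow> c < \<Phi> l"
  proof (rule ccontr)
    assume "\<not> ?thesis"
    then have "\<forall>n::nat. \<exists>l. l \<in> A \<and> real n < norm l \<and> \<Phi> l \<le> c" by (auto simp: not_less)
    then obtain ls where ls: "\<And>n. ls n \<in> A" "\<And>n. real n < norm (ls n)" "\<And>n. \<Phi> (ls n) \<le> c"
      by metis
    have "filterlim (\<lambda>k. norm (ls k)) at_top sequentially"
      by (rule filterlim_at_top_mono[OF filterlim_real_sequentially])
        (use ls(2) less_imp_le in \<open>auto intro: always_eventually\<close>)
    then have "eventually (\<lambda>k. c < \<Phi> (ls k)) sequentially" using key ls(1) by blast
    then have "eventually (\<lambda>k. False) sequentially"
      by eventually_elim (use ls(3) in \<open>auto simp: not_less[symmetric]\<close>)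
    then show False by simp
  qed
  then obtain R where R: "\<And>l. l \<in> A \<Longrightarrow> R < norm l \<Longrightarrow> c < \<Phi> l" by blast
  define R' where "R' = max R (norm l0) + 1"
  have R'0: "R' > 0" unfolding R'_def using norm_ge_zero[of l0] max.cobounded2[of "norm l0" R] by linarith
  define B where "B = {l \<in> A. norm l \<le> R'}"
  have l0B: "l0 \<in> B" using l0 by (auto simp: B_def R'_def)
  have BA: "B \<subseteq> A" by (auto simp: B_def)
  have bA: "bdd_below (\<Phi> ` A)" using lowb by (intro bdd_belowI2[where m="- \<gamma>"]) auto
  have bB: "bdd_below (\<Phi> ` B)" using lowb BA by (intro bdd_belowI2[where m="- \<gamma>"]) auto
  have le1: "(INF l \<in> A. \<Phi> l) \<le> (INF l \<in> B. \<Phi> l)"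
    by (rule cINF_superset_mono) (use l0B BA bA in auto)
  have le2: "(INF l \<in> B. \<Phi> l) \<le> (INF l \<in> A. \<Phi> l)"
  proof (rule cINF_greatest)
    show "A \<noteq> {}" using l0 by auto
    fix l assume l: "l \<in> A"
    show "(INF l \<in> B. \<Phi> l) \<le> \<Phi> l"
    proof (cases "l \<in> B")
      case True then show ?thesis by (rule cINF_lower[OF bB])
    next
      case False
      then have "R < norm l" using l by (auto simp: B_def R'_def)
      then have "c < \<Phi> l" using R l by blast
      moreover have "(INF l \<in> B. \<Phi> l) \<le> \<Phi> l0" by (rule cINF_lower[OF bB l0B])
      ultimately show ?thesis using c by linarith
    qed
  qed
  show ?thesis
    using le1 le2 R'0 unfolding A_def \<Phi>_def B_def by (intro exI[of _ R']) auto
qed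

end
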